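(* Let $d,n\ge 2$, $\lambda>0$, $0<\kappa\le 1$, and let $u\in H^{2}_{\mathrm{mix}}$ on $[0,1]^d$ satisfy the standing facts below. Let $I_n:=\{i\in\mathbb{N}^d:\|i\|_1\le n\}$ and let $u_i$ ($i\in I_n$) be the piecewise $d$-linear interpolant of $u$ on $\Omega_i$. Let $t_n,t_{n-1}\ge 0$, and let $t_i\in[0,t_n]$ for $\|i\|_1=n$ and $t_i\in[0,t_{n-1}]$ for $\|i\|_1=n-1$. Let $(U_i)_{i\in I_n}$ be $\{0,1\}$-valued random variables with $U_i=0$ almost surely if $\|i\|_1<n-1$ and $\Pr(U_i=1)=G(t_i)$ if $\|i\|_1\in\{n-1,n\}$, where $G(t)=\frac{1}{\lambda\Gamma(1+1/\kappa)}\int_0^t e^{-(x/\lambda)^\kappa}dx$. Let $I'=\{i\in I_n:U_i=0\}$ and let $u^{\mathrm{gcp}}_{I'}=\sum_{i\in I'}c_iu_i$, where $(c_i)_{i\in I'}$ is any solution (chosen measurably) of the general coefficient problem for $I'$. Then $$\mathbb{E}\left[\|u-u^{\mathrm{gcp}}_{I'}\|_{2}\right]\le\epsilon_{n}\cdot\min\left\{16,\ 1+3\left(d+5-e^{-(t_{n}/\lambda)^{\kappa}}-(d+4)\, e^{-(t_{n-1}/\lambda)^{\kappa}}\right)\right\}.$$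
   Context: Notation: for $i\in\mathbb{N}$, $\Omega_i=\{k2^{-i}:k=0,\dots,2^i\}$; for $i\in\mathbb{N}^d$, $\Omega_i=\Omega_{i_1}\times\cdots\times\Omega_{i_d}\subset[0,1]^d$. For multi-indices, $i\le j$ means $i_k\le j_k$ for all $k$, $\|i\|_1=\sum_k i_k$, and $I{\downarrow}:=\{i:\exists j\in I,\ i\le j\}$. $\|\cdot\|_2$ is the $L^2([0,1]^d)$ norm. Hierarchical surpluses: for $j\in\mathbb{N}^d$, $h_j:=\sum_{S\subseteq\{1,\dots,d\}}(-1)^{|S|}u_{j-e_S}$, where $e_S=\sum_{k\in S}e^k$ ($e^k$ the $k$-th unit multi-index) and $u_m:=0$ if some $m_k<0$; so $u_i=\sum_{j\le i}h_j$. Seminorm: $|u|_{H^2_{\mathrm{mix}}}:=\left\|\frac{\partial^{2d}u}{\partial x_1^2\cdots\partial x_d^2}\right\|_2$. Standing facts (taken as given for $u\in H^2_{\mathrm{mix}}$): $u=\sum_{j\in\mathbb{N}^d}h_j$ with convergence in $L^2$, and $\|h_j\|_2\le 3^{-d}4^{-\|j\|_1}|u|_{H^2_{\mathrm{mix}}}$ for all $j$. Define $$\epsilon_n:=\tfrac13\,3^{-d}\,2^{-2n}\,|u|_{H^2_{\mathrm{mix}}}\sum_{k=0}^{d-1}\binom{n+d}{k}\left(\tfrac13\right)^{d-1-k},$$ which equals $3^{-d}|u|_{H^2_{\mathrm{mix}}}\sum_{k=n+1}^{\infty}4^{-k}\binom{k+d-1}{d-1}$. General coefficient problem (GCP) for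 a finite $I\subset\mathbb{N}^d$: for real $(c_i)_{i\in I}$ set $w_i:=\sum_{j\in I,\,j\ge i}c_j$ for $i\in I{\downarrow}$; among all families with $w_i\in\{0,1\}$ for all $i\in I{\downarrow}$, maximise $Q'(w)=\sum_{i\in I{\downarrow}}4^{-\|i\|_1}w_i$; a solution is any maximising family. $G$ is the random-incidence distribution function of a Weibull renewal process with scale $\lambda$ and shape $\kappa$, modelling the probability that the computation of $u_i$ (taking time $t_i$ on one node) is interrupted by a fault; solutions with $\|i\|_1<n-1$ are recomputed on failure and hence always available, while failed solutions with $\|i\|_1\in\{n-1,n\}$ are discarded. *)

theory Defs
  imports "HOL-Probability.Probability"
begin

text \<open>Multi-indices are functions 'd \<Rightarrow> nat for a finite index type 'd with d = CARD('d);
  points of [0,1]^d are vectors of type real^'d.\<close>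

definition norm1 :: "('d::finite \<Rightarrow> nat) \<Rightarrow> nat" where
  "norm1 i = (\<Sum>k\<in>UNIV. i k)"

definition unit_cube :: "(real^'d::finite) set" where
  "unit_cube = cbox 0 One"

definition L2sq :: "(real^'d::finite \<Rightarrow> real) \<Rightarrow> ennreal" where
  "L2sq f = (\<integral>\<^sup>+ x\<in>unit_cube. ennreal ((f x)\<^sup>2) \<partial>lborel)"

definition L2norm :: "(real^'d::finite \<Rightarrow> real) \<Rightarrow> real" where
  "L2norm f = sqrt (enn2real (L2sq f))"

definition hat :: "real \<Rightarrow> real" where
  "hat t = max 0 (1 - \<bar>t\<bar>)"

definition interp :: "(real^'d::finite \<Rightarrow> real) \<Rightarrow> ('d \<Rightarrow> nat) \<Rightarrow> real^'d \<Rightarrow> real" where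
  "interp u i x = (\<Sum>m\<in>{m. \<forall>k. m k \<le> 2 ^ i k}.
      u (\<chi> k. real (m k) / 2 ^ i k) * (\<Prod>k\<in>UNIV. hat (2 ^ i k * x $ k - real (m k))))"

text \<open>u_{m} with the convention u_m = 0 if some component is negative; here m = j - e_S.\<close>
definition shifted_interp ::
  "(real^'d::finite \<Rightarrow> real) \<Rightarrow> ('d \<Rightarrow> nat) \<Rightarrow> 'd set \<Rightarrow> real^'d \<Rightarrow> real" where
  "shifted_interp u j S x =
     (if \<exists>k\<in>S. j k = 0 then 0 else interp u (\<lambda>k. if k \<in> S then j k - 1 else j k) x)"

definition surplus :: "(real^'d::finite \<Rightarrow> real) \<Rightarrow> ('d \<Rightarrow> nat) \<Rightarrow> real^'d \<Rightarrow> real" where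
  "surplus u j x = (\<Sum>S\<in>Pow (UNIV::'d set). (-1) ^ card S * shifted_interp u j S x)"

definition down_closure :: "('d::finite \<Rightarrow> nat) set \<Rightarrow> ('d \<Rightarrow> nat) set" where
  "down_closure I = {i. \<exists>j\<in>I. i \<le> j}"

definition gcp_w :: "('d::finite \<Rightarrow> nat) set \<Rightarrow> (('d \<Rightarrow> nat) \<Rightarrow> real) \<Rightarrow> ('d \<Rightarrow> nat) \<Rightarrow> real" where
  "gcp_w I c i = (\<Sum>j\<in>{j\<in>I. i \<le> j}. c j)"

definition gcp_feasible :: "('d::finite \<Rightarrow> nat) set \<Rightarrow> (('d \<Rightarrow> nat) \<Rightarrow> real) \<Rightarrow> bool" where
  "gcp_feasible I c \<longleftrightarrow> (\<forall>i\<in>down_closure I. gcp_w I c i \<in> {0, 1})"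

definition gcp_Q :: "('d::finite \<Rightarrow> nat) set \<Rightarrow> (('d \<Rightarrow> nat) \<Rightarrow> real) \<Rightarrow> real" where
  "gcp_Q I c = (\<Sum>i\<in>down_closure I. (1/4) ^ norm1 i * gcp_w I c i)"

definition gcp_solution :: "('d::finite \<Rightarrow> nat) set \<Rightarrow> (('d \<Rightarrow> nat) \<Rightarrow> real) \<Rightarrow> bool" where
  "gcp_solution I c \<longleftrightarrow> gcp_feasible I c \<and> (\<forall>c'. gcp_feasible I c' \<longrightarrow> gcp_Q I c' \<le> gcp_Q I c)"

text \<open>Random-incidence distribution function of a Weibull renewal process.\<close>
definition weibull_G :: "real \<Rightarrow> real \<Rightarrow> real \<Rightarrow> real" where
  "weibull_G lam kap t = 1 / (lam * Gamma (1 + 1 / kap)) * integral {0..t} (\<lambda>x. exp (- ((x / lam) powr kap)))"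

definition eps_n :: "nat \<Rightarrow> nat \<Rightarrow> real \<Rightarrow> real" where
  "eps_n d n M = (1/3) * (1/3) ^ d * (1/2) ^ (2*n) * M *
      (\<Sum>k<d. real ((n + d) choose k) * (1/3) ^ (d - 1 - k))"

end

theory Submission
  imports Defs
begin

lemma norm1_mono: "i \<le> j \<Longrightarrow> norm1 (i::'d::finite\<Rightarrow>nat) \<le> norm1 j"
  unfolding norm1_def by (intro sum_mono) (auto simp: le_fun_def)

lemma comp_le_norm1: "(i::'d::finite\<Rightarrow>nat) k \<le> norm1 i"
  unfolding norm1_def by (rule member_le_sum) auto

lemma finite_norm1_le: "finite {j::'d::finite\<Rightarrow>nat. norm1 j \<le> N}"
proof -
  have "{j::'d\<Rightarrow>nat. norm1 j \<le> N} \<subseteq> Pi\<^sub>E UNIV (\<lambda>_. {..N})"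
    by (auto simp: PiE_UNIV_domain intro: le_trans[OF comp_le_norm1])
  moreover have "finite (Pi\<^sub>E (UNIV::'d set) (\<lambda>_. {..N}))"
    by (intro finite_PiE) auto
  ultimately show ?thesis by (rule finite_subset)
qed

lemma finite_norm1_eq: "finite {j::'d::finite\<Rightarrow>nat. norm1 j = N}"
  by (rule finite_subset[OF _ finite_norm1_le[of N]]) auto

lemma finite_le_fun: "finite {j::'d::finite\<Rightarrow>nat. j \<le> i}"
  by (rule finite_subset[OF _ finite_norm1_le[of "norm1 i"]]) (auto intro: norm1_mono)

lemma alt_sum_pow:
  assumes "finite T"
  shows "(\<Sum>S\<in>Pow T. (-1::real) ^ card S) = (if T = {} then 1 else 0)"
proof (cases "T = {}")
  case True then show ?thesis by simp
next
  case False
  have "card {S. S \<subseteq> T \<and> {} \<subseteq> S \<and> even (card S)} = card {S. S \<subseteq> T \<and> {} \<subseteq> S \<and> odd (card S)}"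
    using card_subsupersets_even_odd[OF assms, of "{}"] False by blast
  then have "card {S. S \<in> Pow T \<and> even (card S)} = card {S. S \<in> Pow T \<and> odd (card S)}"
    by simp
  then have "(\<Sum>S\<in>Pow T. (-1::real) ^ card S) = 0"
    by (intro sum_alternating_cancels) (use assms in auto)
  then show ?thesis using False by simp
qed

definition addS :: "'d set \<Rightarrow> ('d \<Rightarrow> nat) \<Rightarrow> 'd \<Rightarrow> nat" where
  "addS S j = (\<lambda>k. if k \<in> S then j k + 1 else j k)"
definition subS :: "'d set \<Rightarrow> ('d \<Rightarrow> nat) \<Rightarrow> 'd \<Rightarrow> nat" where
  "subS S j = (\<lambda>k. if k \<in> S then j k - 1 else j k)"

lemma mobius_down:
  fixes f :: "('d::finite \<Rightarrow> nat) \<Rightarrow> real"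
  shows "(\<Sum>j\<in>{j. j \<le> i}. \<Sum>S\<in>Pow UNIV. (-1) ^ card S *
            (if \<exists>k\<in>S. j k = 0 then 0 else f (subS S j))) = f i"
proof -
  let ?J = "{j. j \<le> i}"
  have fJ: "finite ?J" by (rule finite_le_fun)
  have step1: "(\<Sum>j\<in>?J. (if \<exists>k\<in>S. j k = 0 then 0 else f (subS S j)))
      = (\<Sum>m\<in>{m\<in>?J. S \<subseteq> {k. m k < i k}}. f m)" for S :: "'d set"
  proof -
    have "(\<Sum>j\<in>?J. (if \<exists>k\<in>S. j k = 0 then 0 else f (subS S j)))
       = (\<Sum>j\<in>{j\<in>?J. \<not>(\<exists>k\<in>S. j k = 0)}. f (subS S j))"
      by (simp add: sum.If_cases[OF fJ]) (auto intro!: sum.cong)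
    also have "\<dots> = (\<Sum>m\<in>{m\<in>?J. S \<subseteq> {k. m k < i k}}. f m)"
    proof (rule sum.reindex_bij_witness[where i="addS S" and j="subS S"])
      fix a assume a: "a \<in> {m\<in>?J. S \<subseteq> {k. m k < i k}}"
      show "subS S (addS S a) = a" by (simp add: subS_def addS_def fun_eq_iff)
      have "addS S a \<le> i" using a unfolding le_fun_def addS_def
        by (auto simp: Suc_le_eq)
      moreover have "\<not>(\<exists>k\<in>S. addS S a k = 0)" by (simp add: addS_def)
      ultimately show "addS S a \<in> {j\<in>?J. \<not>(\<exists>k\<in>S. j k = 0)}" by simp
    next
      fix b assume b: "b \<in> {j\<in>?J. \<not>(\<exists>k\<in>S. j k = 0)}"
      then have b1: "\<And>k. b k \<le> i k" and b2: "\<And>k. k \<in> S \<Longrightarrow> b k \<noteq> 0"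
        by (auto simp: le_fun_def)
      show "addS S (subS S b) = b"
      proof
        fix k show "addS S (subS S b) k = b k"
          using b2[of k] unfolding subS_def addS_def by (cases "k \<in> S") auto
      qed
      have "subS S b \<le> i" unfolding le_fun_def subS_def
        using b1 by (auto intro: le_trans[OF diff_le_self])
      moreover have "S \<subseteq> {k. subS S b k < i k}"
      proof
        fix k assume "k \<in> S" then show "k \<in> {k. subS S b k < i k}"
          using b1[of k] b2[of k] by (simp add: subS_def)
      qed
      ultimately show "subS S b \<in> {m\<in>?J. S \<subseteq> {k. m k < i k}}" by simp
      show "f (subS S b) = f (subS S b)" by simp
    qed
    finally show ?thesis .
  qed
  have "(\<Sum>j\<in>?J. \<Sum>S\<in>Pow UNIV. (-1) ^ card S *
            (if \<exists>k\<in>S. j k = 0 then 0 else f (subS S j)))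
     = (\<Sum>S\<in>Pow UNIV. (-1) ^ card S * (\<Sum>j\<in>?J. (if \<exists>k\<in>S. j k = 0 then 0 else f (subS S j))))"
    by (subst sum.swap) (simp add: sum_distrib_left)
  also have "\<dots> = (\<Sum>S\<in>Pow UNIV. (\<Sum>m\<in>?J. if S \<subseteq> {k. m k < i k} then (-1) ^ card S * f m else 0))"
    by (intro sum.cong refl, unfold step1 sum_distrib_left sum.inter_filter[OF fJ]) (auto intro!: sum.cong)
  also have "\<dots> = (\<Sum>m\<in>?J. f m * (\<Sum>S\<in>Pow {k. m k < i k}. (-1) ^ card S))"
    apply (subst sum.swap)
    apply (intro sum.cong refl)
    apply (simp add: sum_distrib_left)
    apply (subst sum.inter_filter[symmetric], simp)
    apply (intro sum.cong)
    by (auto simp: Pow_def)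
  also have "\<dots> = (\<Sum>m\<in>?J. if m = i then f m else 0)"
  proof (intro sum.cong refl)
    fix m assume "m \<in> ?J"
    then have "{k. m k < i k} = {} \<longleftrightarrow> m = i"
      by (auto simp: le_fun_def fun_eq_iff) (metis le_antisym not_less)
    then show "f m * (\<Sum>S\<in>Pow {k. m k < i k}. (-1) ^ card S) = (if m = i then f m else 0)"
      by (simp add: alt_sum_pow)
  qed
  also have "\<dots> = f i" using fJ by (simp add: sum.delta)
  finally show ?thesis .
qed


lemma sum_Pow_restrict:
  "(\<Sum>S\<in>Pow (UNIV::'d::finite set). if S \<subseteq> T then g S else 0) = (\<Sum>S\<in>Pow T. g S)"
proof -
  have "(\<Sum>S\<in>Pow (UNIV::'d set). if S \<subseteq> T then g S else 0) = (\<Sum>S\<in>{S\<in>Pow UNIV. S \<subseteq> T}. g S)"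
    using sum.inter_filter[of "Pow (UNIV::'d set)" g "\<lambda>S. S \<subseteq> T"] by simp
  also have "{S\<in>Pow UNIV. S \<subseteq> T} = Pow T" by auto
  finally show ?thesis .
qed

lemma addS_ge: "j \<le> addS S j"
  by (auto simp: le_fun_def addS_def)

lemma mobius_up:
  fixes J I :: "('d::finite\<Rightarrow>nat) set"
  assumes fI: "finite I" and JI: "J \<subseteq> I" and down: "\<And>j i. j \<in> J \<Longrightarrow> i \<le> j \<Longrightarrow> i \<in> J"
  shows "(\<Sum>j\<in>{j\<in>I. i \<le> j}. \<Sum>S\<in>Pow UNIV. (-1) ^ card S * (if addS S j \<in> J then 1 else 0))
         = (if i \<in> J then 1 else (0::real))"
proof -
  let ?K = "{j\<in>J. i \<le> j}"
  have fJ: "finite J" using fI JI finite_subset by blast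
  have fK: "finite ?K" using fJ by simp
  have "(\<Sum>j\<in>{j\<in>I. i \<le> j}. \<Sum>S\<in>Pow UNIV. (-1) ^ card S * (if addS S j \<in> J then 1 else 0))
      = (\<Sum>j\<in>?K. \<Sum>S\<in>Pow UNIV. (-1) ^ card S * (if addS S j \<in> J then 1 else (0::real)))"
  proof (rule sum.mono_neutral_right)
    show "finite {j \<in> I. i \<le> j}" using fI by simp
    show "?K \<subseteq> {j \<in> I. i \<le> j}" using JI by auto
    show "\<forall>j\<in>{j \<in> I. i \<le> j} - ?K. (\<Sum>S\<in>Pow UNIV. (-1) ^ card S * (if addS S j \<in> J then 1 else (0::real))) = 0"
    proof
      fix j assume "j \<in> {j \<in> I. i \<le> j} - ?K"
      then have "j \<notin> J" by auto
      then have "\<And>S. addS S j \<notin> J" using down addS_ge by blast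
      then show "(\<Sum>S\<in>Pow UNIV. (-1) ^ card S * (if addS S j \<in> J then 1 else (0::real))) = 0" by simp
    qed
  qed
  also have "\<dots> = (\<Sum>S\<in>Pow UNIV. (-1) ^ card S * (\<Sum>j\<in>?K. (if addS S j \<in> J then 1 else (0::real))))"
    by (subst sum.swap) (simp add: sum_distrib_left)
  also have "\<dots> = (\<Sum>S\<in>Pow UNIV. (\<Sum>m\<in>?K. if S \<subseteq> {k. i k < m k} then (-1) ^ card S else (0::real)))"
  proof (intro sum.cong refl)
    fix S :: "'d set"
    have c1: "(\<Sum>j\<in>?K. (if addS S j \<in> J then 1 else (0::real))) = real (card {j\<in>?K. addS S j \<in> J})"
      using sum.inter_filter[OF fK, of "\<lambda>_. (1::real)" "\<lambda>j. addS S j \<in> J"] by simp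
    have c2: "(\<Sum>m\<in>?K. if S \<subseteq> {k. i k < m k} then (-1) ^ card S else (0::real))
        = (-1) ^ card S * real (card {m\<in>?K. S \<subseteq> {k. i k < m k}})"
      using sum.inter_filter[OF fK, of "\<lambda>_. (-1::real) ^ card S" "\<lambda>m. S \<subseteq> {k. i k < m k}"] by (simp add: mult.commute)
    have "bij_betw (addS S) {j\<in>?K. addS S j \<in> J} {m\<in>?K. S \<subseteq> {k. i k < m k}}"
    proof (rule bij_betw_byWitness[where f'="subS S"])
      show "\<forall>b\<in>{j\<in>?K. addS S j \<in> J}. subS S (addS S b) = b"
        by (simp add: subS_def addS_def fun_eq_iff)
      show "\<forall>a\<in>{m\<in>?K. S \<subseteq> {k. i k < m k}}. addS S (subS S a) = a"
      proof
        fix a assume a: "a \<in> {m\<in>?K. S \<subseteq> {k. i k < m k}}"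
        then have a2: "\<And>k. k \<in> S \<Longrightarrow> i k < a k" by auto
        show "addS S (subS S a) = a"
        proof
          fix k show "addS S (subS S a) k = a k"
            using a2[of k] unfolding subS_def addS_def by (cases "k \<in> S") auto
        qed
      qed
      show "addS S ` {j\<in>?K. addS S j \<in> J} \<subseteq> {m\<in>?K. S \<subseteq> {k. i k < m k}}"
      proof
        fix m assume "m \<in> addS S ` {j\<in>?K. addS S j \<in> J}"
        then obtain b where b: "b \<in> {j\<in>?K. addS S j \<in> J}" and m: "m = addS S b" by auto
        have "i \<le> addS S b" using b addS_ge order_trans by blast
        moreover have "S \<subseteq> {k. i k < addS S b k}"
          using b by (auto simp: addS_def le_fun_def less_Suc_eq_le)
        ultimately show "m \<in> {m\<in>?K. S \<subseteq> {k. i k < m k}}" using b m by simp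
      qed
      show "subS S ` {m\<in>?K. S \<subseteq> {k. i k < m k}} \<subseteq> {j\<in>?K. addS S j \<in> J}"
      proof
        fix j assume "j \<in> subS S ` {m\<in>?K. S \<subseteq> {k. i k < m k}}"
        then obtain a where a: "a \<in> {m\<in>?K. S \<subseteq> {k. i k < m k}}" and j: "j = subS S a" by auto
        then have a1: "a \<in> J" "i \<le> a" and a2: "\<And>k. k \<in> S \<Longrightarrow> i k < a k"
          by auto
        have aa: "addS S (subS S a) = a"
        proof
          fix k show "addS S (subS S a) k = a k"
            using a2[of k] unfolding subS_def addS_def by (cases "k \<in> S") auto
        qed
        have le: "subS S a \<le> a" unfolding le_fun_def subS_def by auto
        have "i \<le> subS S a" unfolding le_fun_def
        proof
          fix k
          have "i k \<le> a k" using a1(2) by (simp add: le_fun_def)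
          moreover have "k \<in> S \<Longrightarrow> i k < a k" using a2 by blast
          ultimately show "i k \<le> subS S a k"
          proof (cases "k \<in> S")
            case True
            then have "i k < a k" using a2 by blast
            then have "i k \<le> a k - 1" by linarith
            then show ?thesis using True by (simp add: subS_def)
          next
            case False
            then show ?thesis using \<open>i k \<le> a k\<close> by (simp add: subS_def)
          qed
        qed
        moreover have "subS S a \<in> J" using down[OF a1(1) le] .
        ultimately show "j \<in> {j\<in>?K. addS S j \<in> J}"
          using aa a1 j by simp
      qed
    qed
    then have "card {j\<in>?K. addS S j \<in> J} = card {m\<in>?K. S \<subseteq> {k. i k < m k}}"
      by (rule bij_betw_same_card)
    then show "(-1) ^ card S * (\<Sum>j\<in>?K. (if addS S j \<in> J then 1 else (0::real)))
        = (\<Sum>m\<in>?K. if S \<subseteq> {k. i k < m k} then (-1) ^ card S else (0::real))"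
      unfolding c1 c2 by simp
  qed
  also have "\<dots> = (\<Sum>m\<in>?K. (\<Sum>S\<in>Pow {k. i k < m k}. (-1) ^ card S))"
    by (subst sum.swap) (simp only: sum_Pow_restrict)
  also have "\<dots> = (\<Sum>m\<in>?K. if m = i then 1 else 0)"
  proof (intro sum.cong refl)
    fix m assume "m \<in> ?K"
    then have "{k. i k < m k} = {} \<longleftrightarrow> m = i"
      by (auto simp: le_fun_def fun_eq_iff) (metis le_antisym not_less)
    then show "(\<Sum>S\<in>Pow {k. i k < m k}. (-1::real) ^ card S) = (if m = i then 1 else 0)"
      by (simp add: alt_sum_pow)
  qed
  also have "\<dots> = (if i \<in> J then 1 else 0)" using fK by (simp add: sum.delta)
  finally show ?thesis .
qed

lemma interp_sum_surplus:
  "interp u i x = (\<Sum>j\<in>{j. j \<le> i}. surplus u j x)"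
proof -
  have "(\<Sum>j\<in>{j. j \<le> i}. \<Sum>S\<in>Pow UNIV. (-1) ^ card S *
            (if \<exists>k\<in>S. j k = 0 then 0 else interp u (\<lambda>k. if k \<in> S then j k - 1 else j k) x)) = interp u i x"
    using mobius_down[where i=i and f="\<lambda>m. interp u m x"] unfolding subS_def .
  then show ?thesis unfolding surplus_def shifted_interp_def by (rule sym)
qed

lemma card_level:
  "card {j::'d::finite\<Rightarrow>nat. norm1 j = k} = (CARD('d) + k - 1) choose k"
proof -
  have "bij_betw count (multisets_of_size (UNIV::'d set) k) {j::'d\<Rightarrow>nat. norm1 j = k}"
  proof (rule bij_betwI')
    show "\<And>x y. x \<in> multisets_of_size UNIV k \<Longrightarrow> y \<in> multisets_of_size UNIV k \<Longrightarrow>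
        (count x = count y) = (x = y)" by (auto simp: multiset_eq_iff)
    fix x assume "x \<in> multisets_of_size (UNIV::'d set) k"
    then have "size x = k" by (simp add: multisets_of_size_def)
    moreover have "size x = norm1 (count x)"
      unfolding norm1_def size_multiset_overloaded_eq
      by (rule sum.mono_neutral_left) (auto simp: not_in_iff)
    ultimately show "count x \<in> {j. norm1 j = k}" by simp
  next
    fix y :: "'d \<Rightarrow> nat" assume y: "y \<in> {j. norm1 j = k}"
    have cy: "count (Abs_multiset y) = y"
      by (rule count_Abs_multiset) simp
    have "size (Abs_multiset y) = sum (count (Abs_multiset y)) UNIV"
      unfolding size_multiset_overloaded_eq
      by (rule sum.mono_neutral_left) (auto simp: not_in_iff)
    then have "size (Abs_multiset y) = norm1 y" unfolding norm1_def cy .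
    then have "Abs_multiset y \<in> multisets_of_size UNIV k"
      using y cy by (auto simp: multisets_of_size_def)
    then show "\<exists>x\<in>multisets_of_size UNIV k. y = count x" using cy by metis
  qed
  then have "card {j::'d\<Rightarrow>nat. norm1 j = k} = card (multisets_of_size (UNIV::'d set) k)"
    by (simp add: bij_betw_same_card)
  also have "\<dots> = (CARD('d) + k - 1) choose k" by (simp add: card_multisets_of_size)
  finally show ?thesis .
qed

lemma card_level': 
  "card {j::'d::finite\<Rightarrow>nat. norm1 j = k} = (k + (CARD('d) - 1)) choose (CARD('d) - 1)"
proof -
  have "CARD('d) + k - 1 = k + (CARD('d) - 1)" using finite_UNIV_card_ge_0[where 'a='d] by simp
  then show ?thesis unfolding card_level by (metis binomial_symmetric le_add1 add_diff_cancel_left')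
qed

definition Rt :: "nat \<Rightarrow> nat \<Rightarrow> real" where
  "Rt e n = (1/3) * (1/4)^n * (\<Sum>k\<le>e. real ((n + Suc e) choose k) * (1/3)^(e-k))"

lemma FG: "4 * (\<Sum>k\<le>e. real (N choose k) * 3^k) - (\<Sum>k\<le>e. real (Suc N choose k) * 3^k)
    = 3^(Suc e) * real (N choose e)"
proof (induction e)
  case 0 then show ?case by simp
next
  case (Suc e)
  have "real (Suc N choose Suc e) = real (N choose e) + real (N choose Suc e)" by simp
  then show ?case using Suc.IH by (simp add: algebra_simps)
qed

lemma Rt_alt: "Rt e n = (1/3) * (1/4)^n / 3^e * (\<Sum>k\<le>e. real ((n + Suc e) choose k) * 3^k)"
proof -
  have "(1/3::real)^(e-k) = 3^k / 3^e" if "k \<le> e" for k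
    using that by (simp add: power_diff power_divide)
  then have "(\<Sum>k\<le>e. real ((n + Suc e) choose k) * (1/3)^(e-k)) = (\<Sum>k\<le>e. real ((n + Suc e) choose k) * 3^k) / 3^e"
    by (simp add: sum_divide_distrib)
  then show ?thesis unfolding Rt_def by simp
qed

lemma Rt_step: "Rt e n - Rt e (Suc n) = (1/4)^(Suc n) * real ((Suc n + e) choose e)"
proof -
  let ?N = "n + Suc e"
  have e: "Suc n + Suc e = Suc ?N" "Suc n + e = ?N" by simp_all
  have "Rt e n - Rt e (Suc n) = (1/3) * (1/4)^(Suc n) / 3^e *
      (4 * (\<Sum>k\<le>e. real (?N choose k) * 3^k) - (\<Sum>k\<le>e. real (Suc ?N choose k) * 3^k))"
    unfolding Rt_alt e by (simp add: algebra_simps)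
  also have "\<dots> = (1/4)^(Suc n) * real (?N choose e)" unfolding FG by simp
  finally show ?thesis using e by simp
qed

lemma Rt_nonneg: "Rt e n \<ge> 0" unfolding Rt_def by (intro mult_nonneg_nonneg sum_nonneg) auto

lemma Rt_tele: "n \<le> N \<Longrightarrow> (\<Sum>k\<in>{n<..N}. (1/4)^k * real ((k+e) choose e)) + Rt e N = Rt e n"
proof (induction N rule: dec_induct)
  case base then show ?case by simp
next
  case (step N)
  have "{n<..Suc N} = insert (Suc N) {n<..N}" using step.hyps by auto
  then have "(\<Sum>k\<in>{n<..Suc N}. (1/4)^k * real ((k+e) choose e)) = (1/4)^(Suc N) * real ((Suc N+e) choose e) + (\<Sum>k\<in>{n<..N}. (1/4)^k * real ((k+e) choose e))"
    by simp
  then show ?case using step.IH Rt_step[of e N] by simp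
qed

lemma tail_bound:
  "(\<Sum>j\<in>{j::'d::finite\<Rightarrow>nat. n < norm1 j \<and> norm1 j \<le> N}. (1/4::real)^norm1 j) \<le> Rt (CARD('d)-1) n"
proof (cases "n \<le> N")
  case False
  then have e: "{j::'d\<Rightarrow>nat. n < norm1 j \<and> norm1 j \<le> N} = {}" by auto
  show ?thesis unfolding e using Rt_nonneg by simp
next
  case True
  let ?S = "{j::'d\<Rightarrow>nat. n < norm1 j \<and> norm1 j \<le> N}"
  have fS: "finite ?S" by (rule finite_subset[OF _ finite_norm1_le[of N]]) auto
  have "(\<Sum>j\<in>?S. (1/4::real)^norm1 j) = (\<Sum>k\<in>{n<..N}. \<Sum>j\<in>{j\<in>?S. norm1 j = k}. (1/4::real)^norm1 j)"
    by (rule sum.group[symmetric]) (use fS in auto)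
  also have "\<dots> = (\<Sum>k\<in>{n<..N}. (1/4)^k * real ((k + (CARD('d)-1)) choose (CARD('d)-1)))"
  proof (intro sum.cong refl)
    fix k assume k: "k \<in> {n<..N}"
    then have "{j\<in>?S. norm1 j = k} = {j. norm1 j = k}" by auto
    then show "(\<Sum>j\<in>{j\<in>?S. norm1 j = k}. (1/4::real)^norm1 j) = (1/4)^k * real ((k + (CARD('d)-1)) choose (CARD('d)-1))"
      by (simp add: card_level')
  qed
  also have "\<dots> \<le> Rt (CARD('d)-1) n" using Rt_tele[OF True, of "CARD('d)-1"] Rt_nonneg[of "CARD('d)-1" N] by linarith
  finally show ?thesis .
qed

lemma eps_Rt: "d \<ge> 1 \<Longrightarrow> eps_n d n M = (1/3)^d * M * Rt (d-1) n"
proof -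
  assume d: "d \<ge> 1"
  then obtain e where de: "d = Suc e" by (cases d) auto
  have "(1/2::real)^(2*n) = (1/4)^n" by (simp add: power_mult power2_eq_square)
  moreover have "{..<d} = {..e}" using de by auto
  moreover have "n + d = n + Suc e" using de by simp
  ultimately show ?thesis unfolding eps_n_def Rt_def using de by (simp add: algebra_simps)
qed

lemma Rt_lower: "Rt e n \<ge> (1/3) * (1/4)^n * real ((n + Suc e) choose e)"
proof -
  have "real ((n + Suc e) choose e) * (1/3)^(e-e) \<le> (\<Sum>k\<le>e. real ((n + Suc e) choose k) * (1/3)^(e-k))"
    by (rule member_le_sum) auto
  then show ?thesis unfolding Rt_def by (simp add: mult_left_mono)
qed

lemma powr_subadd:
  fixes a b k :: real
  assumes a: "a \<ge> 0" and b: "b \<ge> 0" and k: "0 < k" "k \<le> 1"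
  shows "(a + b) powr k \<le> a powr k + b powr k"
proof (cases "a + b = 0")
  case True then show ?thesis using a b by simp
next
  case False
  let ?s = "a + b"
  have s: "?s > 0" using a b False by linarith
  have le: "x powr k \<ge> x * ?s powr (k - 1)" if x: "x \<ge> 0" "x \<le> ?s" for x
  proof (cases "x = 0")
    case True then show ?thesis by simp
  next
    case False
    then have xp: "x > 0" using x by simp
    have "x powr k = x powr (1 + (k - 1))" by simp
    also have "\<dots> = x powr 1 * x powr (k - 1)" by (rule powr_add)
    also have "\<dots> = x * x powr (k - 1)" using xp by simp
    finally have "x powr k = x * x powr (k - 1)" .
    also have "\<dots> \<ge> x * ?s powr (k - 1)"
      using xp x k by (intro mult_left_mono powr_mono2') auto
    finally show ?thesis .
  qed
  have "?s powr k = ?s powr (1 + (k - 1))" by simp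
  also have "\<dots> = ?s powr 1 * ?s powr (k - 1)" by (rule powr_add)
  also have "\<dots> = ?s * ?s powr (k - 1)" using s by simp
  also have "\<dots> = a * ?s powr (k - 1) + b * ?s powr (k - 1)" by (simp add: algebra_simps)
  also have "\<dots> \<le> a powr k + b powr k" using le[of a] le[of b] a b by simp
  finally show ?thesis .
qed

context
  fixes lam kap :: real
  assumes lam: "lam > 0" and kap: "0 < kap" "kap \<le> 1"
begin

definition Sw :: "real \<Rightarrow> real" where "Sw x = exp (- ((x / lam) powr kap))"

lemma Sw_cont: "continuous_on {0..} Sw"
  unfolding Sw_def
  by (intro continuous_intros continuous_on_powr') (use lam kap in auto)

lemma Sw_cont': "a \<ge> 0 \<Longrightarrow> continuous_on {a..b} Sw"
  by (rule continuous_on_subset[OF Sw_cont]) auto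

lemma Sw_int: "a \<ge> 0 \<Longrightarrow> Sw integrable_on {a..b}"
  by (intro integrable_continuous_interval Sw_cont')

lemma Sw_pos: "Sw x > 0" unfolding Sw_def by simp

lemma Sw_le1: "x \<ge> 0 \<Longrightarrow> Sw x \<le> 1" unfolding Sw_def using lam by simp

lemma Sw_submult: "x \<ge> 0 \<Longrightarrow> y \<ge> 0 \<Longrightarrow> Sw x * Sw y \<le> Sw (y + x)"
proof -
  assume x: "x \<ge> 0" and y: "y \<ge> 0"
  have "((y + x) / lam) powr kap \<le> (x / lam) powr kap + (y / lam) powr kap"
    using powr_subadd[of "x/lam" "y/lam" kap] x y lam kap by (simp add: add_divide_distrib add.commute)
  then show ?thesis unfolding Sw_def by (simp flip: exp_add)
qed

lemma Sw_mono: "0 \<le> x \<Longrightarrow> x \<le> y \<Longrightarrow> Sw y \<le> Sw x"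
  unfolding Sw_def using lam kap by (auto intro!: powr_mono2 divide_right_mono)

definition muW :: real where "muW = lam * Gamma (1 + 1 / kap)"

lemma muW_eq: "muW = lam / kap * Gamma (1 / kap)"
proof -
  have "1 / kap \<notin> \<int>\<^sub>\<le>\<^sub>0" using kap nonpos_Ints_nonpos[of "1/kap"] by force
  then have "Gamma (1 / kap + 1) = 1 / kap * Gamma (1 / kap)" by (rule Gamma_plus1)
  then show ?thesis by (simp add: add.commute muW_def)
qed

lemma muW_pos: "muW > 0"
proof -
  have "1 / kap > 0" using kap by simp
  then have "1 + 1 / kap > 0" by linarith
  then show ?thesis unfolding muW_def using lam by (intro mult_pos_pos Gamma_real_pos) auto
qed

lemma Sw_tail:
  assumes a: "0 < a" "a \<le> T"
  shows "integral {a..T} Sw \<le> muW"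
proof -
  define g where "g x = (x / lam) powr kap" for x
  define g' where "g' x = kap * (x / lam) powr (kap - 1) * (1 / lam)" for x
  define f where "f t = t powr (1 / kap - 1) / exp t" for t :: real
  have gpos: "g x > 0" if "x > 0" for x using that lam by (simp add: g_def)
  have gmono: "g a \<le> g T" unfolding g_def using a lam kap by (intro powr_mono2 divide_right_mono) auto
  have deriv: "(g has_field_derivative g' x) (at x within {a..T})" if "x \<in> {a..T}" for x
  proof -
    have xp: "x / lam > 0" using that a lam by auto
    have "((\<lambda>x. x / lam) has_real_derivative 1 / lam) (at x)"
      using lam by (auto intro!: derivative_eq_intros)
    from DERIV_chain2[OF has_real_derivative_powr[OF xp, of kap] this]
    show ?thesis unfolding g_def g'_def by (rule has_field_derivative_at_within)
  qed
  have fcont: "continuous_on {g a..g T} f"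
    unfolding f_def using gpos[of a] a
    by (intro continuous_intros continuous_on_powr) auto
  have sub: "((\<lambda>x. g' x *\<^sub>R f (g x)) has_integral integral {g a..g T} f) {a..T}"
    by (rule has_integral_substitution[OF a(2) gmono _ fcont deriv])
      (use lam kap a in \<open>auto simp: g_def intro!: powr_mono2 divide_right_mono\<close>)
  have eq: "g' x *\<^sub>R f (g x) = kap / lam * Sw x" if "x \<in> {a..T}" for x
  proof -
    have xp: "x / lam > 0" and x0: "x \<noteq> 0" using that a lam by auto
    have "(g x) powr (1 / kap - 1) = (x / lam) powr (1 - kap)"
      unfolding g_def using kap by (simp add: powr_powr algebra_simps)
    moreover have "(x / lam) powr (kap - 1) * (x / lam) powr (1 - kap) = 1"
      using xp lam x0 by (simp flip: powr_add)
    ultimately show ?thesis unfolding g'_def f_def Sw_def g_def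
      by (simp add: exp_minus field_simps)
  qed
  have "((\<lambda>x. kap / lam * Sw x) has_integral integral {g a..g T} f) {a..T}"
    using sub by (rule has_integral_eq[rotated]) (metis eq atLeastAtMost_iff)
  then have i1: "kap / lam * integral {a..T} Sw = integral {g a..g T} f"
    using integral_unique integral_mult_right by metis
  have Gint: "(f has_integral Gamma (1 / kap)) {0..}"
    unfolding f_def using Gamma_integral_real[of "1/kap"] kap by simp
  have fnn: "\<forall>x\<in>{0..}. 0 \<le> f x" unfolding f_def by simp
  have "integral {g a..g T} f \<le> integral {0..} f"
  proof (rule integral_subset_le)
    show "{g a..g T} \<subseteq> {0..}" using gpos[of a] a by auto
    show "f integrable_on {g a..g T}" by (rule integrable_continuous_interval[OF fcont])
    show "f integrable_on {0..}" using Gint by blast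
  qed (use fnn in auto)
  also have "\<dots> = Gamma (1 / kap)" using Gint by (rule integral_unique)
  finally have "kap / lam * integral {a..T} Sw \<le> Gamma (1 / kap)" using i1 by simp
  then have "integral {a..T} Sw \<le> lam / kap * Gamma (1 / kap)"
    using lam kap by (simp add: field_simps)
  then show ?thesis using muW_eq by simp
qed

lemma Sw_int_le_muW:
  assumes T: "T \<ge> 0"
  shows "integral {0..T} Sw \<le> muW"
proof (cases "T = 0")
  case True then show ?thesis using muW_pos by simp
next
  case False
  then have Tp: "T > 0" using T by simp
  show ?thesis
  proof (rule field_le_epsilon)
    fix e :: real assume e: "e > 0"
    define a where "a = min e (T / 2)"
    have a: "0 < a" "a \<le> T" "a \<le> e" using e Tp by (auto simp: a_def)
    have "integral {0..a} Sw + integral {a..T} Sw = integral {0..T} Sw"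
      using a by (intro Henstock_Kurzweil_Integration.integral_combine Sw_int) auto
    moreover have "integral {0..a} Sw \<le> integral {0..a} (\<lambda>_. 1::real)"
      using a by (intro integral_le Sw_int) (auto intro: Sw_le1)
    moreover have "integral {0..a} (\<lambda>_. 1::real) = a" using a by simp
    moreover note Sw_tail[OF a(1,2)]
    ultimately show "integral {0..T} Sw \<le> muW + e" using a by linarith
  qed
qed

lemma Sw_shift:
  assumes t: "t \<ge> 0" and T: "T \<ge> 0"
  shows "integral {0..t} Sw + Sw t * integral {0..T} Sw \<le> integral {0..t+T} Sw"
proof -
  have "integral {0..t} Sw + integral {t..t+T} Sw = integral {0..t+T} Sw"
    using t T by (intro Henstock_Kurzweil_Integration.integral_combine Sw_int) auto
  moreover have "integral {0..T} (Sw \<circ> (\<lambda>x. x + t)) = integral {0+t..T+t} Sw"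
    using t by (intro integral_shift Sw_cont') auto
  moreover have "integral {0..T} (\<lambda>y. Sw t * Sw y) \<le> integral {0..T} (Sw \<circ> (\<lambda>x. x + t))"
  proof (rule integral_le)
    show "(\<lambda>y. Sw t * Sw y) integrable_on {0..T}"
      by (intro integrable_continuous_interval continuous_intros Sw_cont') simp
    show "(Sw \<circ> (\<lambda>x. x + t)) integrable_on {0..T}"
      using t by (intro integrable_continuous_interval continuous_on_compose continuous_intros)
        (auto intro: continuous_on_subset[OF Sw_cont])
    show "\<And>x. x \<in> {0..T} \<Longrightarrow> Sw t * Sw x \<le> (Sw \<circ> (\<lambda>x. x + t)) x"
      using t by (auto intro: Sw_submult)
  qed
  moreover have "integral {0..T} (\<lambda>y. Sw t * Sw y) = Sw t * integral {0..T} Sw"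
    by (rule integral_mult_right)
  ultimately show ?thesis by (simp add: add.commute)
qed

lemma weibull_le:
  assumes t: "t \<ge> 0"
  shows "weibull_G lam kap t \<le> 1 - exp (- ((t / lam) powr kap))"
proof -
  define I where "I T = integral {0..T} Sw" for T
  define J where "J = (SUP T\<in>{0..}. I T)"
  have bdd: "bdd_above (I ` {0..})" using Sw_int_le_muW unfolding I_def by (auto intro!: bdd_aboveI)
  have IJ: "I T \<le> J" if "T \<ge> 0" for T unfolding J_def using bdd that by (intro cSUP_upper) auto
  have JmuW: "J \<le> muW" unfolding J_def I_def by (rule cSUP_least) (auto intro: Sw_int_le_muW)
  have "I T \<le> (J - I t) / Sw t" if "T \<ge> 0" for T
  proof -
    have "I t + Sw t * I T \<le> J" using Sw_shift[OF t that] IJ[of "t + T"] t that unfolding I_def by simp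
    then show ?thesis using Sw_pos[of t] by (simp add: field_simps)
  qed
  then have "J \<le> (J - I t) / Sw t" unfolding J_def by (intro cSUP_least) auto
  then have "I t \<le> J * (1 - Sw t)" using Sw_pos[of t] by (simp add: field_simps)
  also have "\<dots> \<le> muW * (1 - Sw t)" using JmuW Sw_le1[OF t] by (intro mult_right_mono) auto
  finally have "I t / muW \<le> 1 - Sw t" using muW_pos by (simp add: field_simps)
  then show ?thesis unfolding weibull_G_def I_def Sw_def muW_def by simp
qed

end

lemma interp_cont: "continuous_on S (interp u i)"
proof -
  have "continuous_on UNIV (interp u i)"
    unfolding interp_def hat_def by (intro continuous_intros)
  then show ?thesis by (rule continuous_on_subset) simp
qed

lemma shifted_interp_cont: "continuous_on S (shifted_interp u j T)"
  unfolding shifted_interp_def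
  by (cases "\<exists>k\<in>T. j k = 0") (simp_all only: if_True if_False continuous_on_const interp_cont)

lemma surplus_cont: "continuous_on S (surplus u j)"
  unfolding surplus_def by (intro continuous_intros shifted_interp_cont)

definition Q2 :: "(real^'d::finite \<Rightarrow> real) \<Rightarrow> real" where
  "Q2 f = integral\<^sup>L lborel (\<lambda>x. indicator unit_cube x * (f x)\<^sup>2)"

lemma compact_unit_cube: "compact (unit_cube :: (real^'d::finite) set)"
  unfolding unit_cube_def by (rule compact_cbox)

lemma Q2_integrable:
  fixes f :: "real^'d::finite \<Rightarrow> real"
  assumes "continuous_on unit_cube f"
  shows "integrable lborel (\<lambda>x. indicator unit_cube x * (f x)\<^sup>2)"
proof -
  have "continuous_on unit_cube (\<lambda>x. (f x)\<^sup>2)"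
    using continuous_on_mult[OF assms assms] by (simp add: power2_eq_square)
  from borel_integrable_compact[OF compact_unit_cube this] show ?thesis by simp
qed

lemma Q2_nonneg: "Q2 f \<ge> 0"
  unfolding Q2_def by (intro integral_nonneg_AE) (auto simp: indicator_def)

lemma L2sq_eq:
  assumes "continuous_on unit_cube f"
  shows "L2sq f = ennreal (Q2 f)"
proof -
  have "L2sq f = (\<integral>\<^sup>+ x. ennreal (indicator unit_cube x * (f x)\<^sup>2) \<partial>lborel)"
    unfolding L2sq_def by (intro nn_integral_cong) (auto simp: indicator_def)
  also have "\<dots> = ennreal (Q2 f)"
    unfolding Q2_def by (intro nn_integral_eq_integral Q2_integrable assms) (auto simp: indicator_def)
  finally show ?thesis .
qed

lemma L2norm_eq:
  assumes "continuous_on unit_cube f"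
  shows "L2norm f = sqrt (Q2 f)"
  unfolding L2norm_def L2sq_eq[OF assms] using Q2_nonneg[of f] by simp

lemma sq_ineq:
  fixes a b t :: real
  assumes "t > 0"
  shows "(a + b)\<^sup>2 \<le> (1 + t) * a\<^sup>2 + (1 + 1 / t) * b\<^sup>2"
proof -
  have "(1 + t) * a\<^sup>2 + (1 + 1 / t) * b\<^sup>2 - (a + b)\<^sup>2 = (t * a - b)\<^sup>2 / t"
    using assms by (simp add: field_simps power2_eq_square)
  moreover have "(t * a - b)\<^sup>2 / t \<ge> 0" using assms by simp
  ultimately show ?thesis by linarith
qed

lemma Q2_tri_t:
  assumes f: "continuous_on unit_cube f" and g: "continuous_on unit_cube g" and t: "t > 0"
  shows "Q2 (\<lambda>x. f x + g x) \<le> (1 + t) * Q2 f + (1 + 1 / t) * Q2 g"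
proof -
  have fg: "continuous_on unit_cube (\<lambda>x. f x + g x)" using f g by (intro continuous_intros)
  have "Q2 (\<lambda>x. f x + g x) \<le> integral\<^sup>L lborel (\<lambda>x. (1 + t) * (indicator unit_cube x * (f x)\<^sup>2)
      + (1 + 1 / t) * (indicator unit_cube x * (g x)\<^sup>2))"
    unfolding Q2_def
  proof (rule integral_mono)
    show "integrable lborel (\<lambda>x. indicator unit_cube x * (f x + g x)\<^sup>2)" by (rule Q2_integrable[OF fg])
    show "integrable lborel (\<lambda>x. (1 + t) * (indicator unit_cube x * (f x)\<^sup>2)
      + (1 + 1 / t) * (indicator unit_cube x * (g x)\<^sup>2))"
      using Q2_integrable[OF f] Q2_integrable[OF g]
      by (intro Bochner_Integration.integrable_add integrable_mult_right) auto
    fix x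
    show "indicator unit_cube x * (f x + g x)\<^sup>2 \<le> (1 + t) * (indicator unit_cube x * (f x)\<^sup>2)
      + (1 + 1 / t) * (indicator unit_cube x * (g x)\<^sup>2)"
      using sq_ineq[OF t, of "f x" "g x"] by (auto simp: indicator_def)
  qed
  also have "\<dots> = (1 + t) * Q2 f + (1 + 1 / t) * Q2 g"
    unfolding Q2_def using Q2_integrable[OF f] Q2_integrable[OF g]
    by (subst Bochner_Integration.integral_add) (auto intro: integrable_mult_right)
  finally show ?thesis .
qed

lemma L2norm_tri:
  assumes f: "continuous_on unit_cube f" and g: "continuous_on unit_cube g"
  shows "L2norm (\<lambda>x. f x + g x) \<le> L2norm f + L2norm g"
proof -
  have fg: "continuous_on unit_cube (\<lambda>x. f x + g x)" using f g by (intro continuous_intros)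
  define p where "p = sqrt (Q2 f)"
  define q where "q = sqrt (Q2 g)"
  have p: "p \<ge> 0" "Q2 f = p\<^sup>2" unfolding p_def using Q2_nonneg[of f] by auto
  have q: "q \<ge> 0" "Q2 g = q\<^sup>2" unfolding q_def using Q2_nonneg[of g] by auto
  have "sqrt (Q2 (\<lambda>x. f x + g x)) \<le> p + q"
  proof (rule field_le_epsilon)
    fix e :: real assume e: "e > 0"
    define a where "a = p + e / 2"
    define b where "b = q + e / 2"
    have ab: "a > 0" "b > 0" "p \<le> a" "q \<le> b" using p q e by (auto simp: a_def b_def)
    have "Q2 (\<lambda>x. f x + g x) \<le> (1 + b / a) * Q2 f + (1 + 1 / (b / a)) * Q2 g"
      using ab by (intro Q2_tri_t f g) simp
    also have "\<dots> \<le> (1 + b / a) * a\<^sup>2 + (1 + a / b) * b\<^sup>2"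
    proof -
      have "p\<^sup>2 \<le> a\<^sup>2" "q\<^sup>2 \<le> b\<^sup>2" using ab p q by (auto intro: power_mono)
      moreover have "0 \<le> 1 + b / a" "0 \<le> 1 + a / b" using ab by simp_all
      moreover have inv: "1 / (b / a) = a / b" by simp
      ultimately show ?thesis unfolding p(2) q(2) inv
        using mult_left_mono[of "p\<^sup>2" "a\<^sup>2" "1 + b / a"] mult_left_mono[of "q\<^sup>2" "b\<^sup>2" "1 + a / b"]
        by linarith
    qed
    also have "\<dots> = (a + b)\<^sup>2" using ab by (simp add: field_simps power2_eq_square)
    finally have "sqrt (Q2 (\<lambda>x. f x + g x)) \<le> a + b"
      using ab by (metis abs_of_pos add_pos_pos real_sqrt_abs real_sqrt_le_mono)
    then show "sqrt (Q2 (\<lambda>x. f x + g x)) \<le> p + q + e" by (simp add: a_def b_def)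
  qed
  then show ?thesis unfolding L2norm_eq[OF fg] L2norm_eq[OF f] L2norm_eq[OF g] p_def q_def .
qed

lemma L2norm_zero: "L2norm (\<lambda>x. 0) = 0"
  unfolding L2norm_def L2sq_def by simp

lemma L2norm_sum:
  assumes "finite F" and "\<And>j. j \<in> F \<Longrightarrow> continuous_on unit_cube (h j)"
  shows "L2norm (\<lambda>x. \<Sum>j\<in>F. h j x) \<le> (\<Sum>j\<in>F. L2norm (h j))"
  using assms
proof (induction F rule: finite_induct)
  case empty then show ?case by (simp add: L2norm_zero)
next
  case (insert a F)
  have "L2norm (\<lambda>x. \<Sum>j\<in>insert a F. h j x) = L2norm (\<lambda>x. h a x + (\<Sum>j\<in>F. h j x))"
    using insert.hyps by simp
  also have "\<dots> \<le> L2norm (h a) + L2norm (\<lambda>x. \<Sum>j\<in>F. h j x)"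
    using insert.prems by (intro L2norm_tri continuous_on_sum) auto
  also have "\<dots> \<le> L2norm (h a) + (\<Sum>j\<in>F. L2norm (h j))"
    using insert.IH insert.prems by simp
  finally show ?case using insert.hyps by simp
qed

lemma L2norm_bound:
  assumes "L2sq f \<le> ennreal (b\<^sup>2)" and "b \<ge> 0"
  shows "L2norm f \<le> b"
proof -
  have "enn2real (L2sq f) \<le> enn2real (ennreal (b\<^sup>2))" using assms by (intro enn2real_mono) auto
  then have "enn2real (L2sq f) \<le> b\<^sup>2" by simp
  then have "sqrt (enn2real (L2sq f)) \<le> sqrt (b\<^sup>2)" by (rule real_sqrt_le_mono)
  then show ?thesis unfolding L2norm_def using assms(2) by simp
qed

lemma det_bound:
  fixes u :: "real^'d::finite \<Rightarrow> real" and I' J :: "('d \<Rightarrow> nat) set" and c :: "('d \<Rightarrow> nat) \<Rightarrow> real"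
  assumes u_cont: "continuous_on unit_cube u" and M: "M \<ge> 0"
    and u_exp: "(\<lambda>N. L2sq (\<lambda>x. u x - (\<Sum>j\<in>{j. norm1 j \<le> N}. surplus u j x))) \<longlonglongrightarrow> 0"
    and sb: "\<And>j. L2sq (surplus u j) \<le> ennreal (((1/3) ^ CARD('d) * (1/4) ^ norm1 j * M)\<^sup>2)"
    and I'n: "I' \<subseteq> {i. norm1 i \<le> n}" and JI: "J \<subseteq> I'"
    and down: "\<And>j i. j \<in> J \<Longrightarrow> i \<le> j \<Longrightarrow> i \<in> J"
    and sol: "gcp_solution I' c"
  shows "L2norm (\<lambda>x. u x - (\<Sum>i\<in>I'. c i * interp u i x))
    \<le> (1/3) ^ CARD('d) * M * Rt (CARD('d) - 1) n
      + (1/3) ^ CARD('d) * M * (\<Sum>j\<in>{j. norm1 j \<le> n} - J. (1/4) ^ norm1 j)"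
proof -
  define DC where "DC = down_closure I'"
  define w where "w = gcp_w I' c"
  define W where "W = {i\<in>DC. w i = 1}"
  define Nn where "Nn = {j::'d\<Rightarrow>nat. norm1 j \<le> n}"
  define K where "K = (1/3) ^ CARD('d) * M * Rt (CARD('d) - 1) n
      + (1/3) ^ CARD('d) * M * (\<Sum>j\<in>Nn - J. (1/4::real) ^ norm1 j)"
  have fNn: "finite Nn" unfolding Nn_def by (rule finite_norm1_le)
  have fI': "finite I'" using I'n finite_norm1_le finite_subset by blast
  have DCn: "DC \<subseteq> Nn"
  proof
    fix i assume "i \<in> DC"
    then obtain j where j: "j \<in> I'" "i \<le> j" unfolding DC_def down_closure_def by blast
    have "norm1 i \<le> norm1 j" by (rule norm1_mono[OF j(2)])
    moreover have "norm1 j \<le> n" using j(1) I'n by blast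
    ultimately show "i \<in> Nn" unfolding Nn_def by simp
  qed
  have fDC: "finite DC" using DCn fNn finite_subset by blast
  have I'DC: "I' \<subseteq> DC" unfolding DC_def down_closure_def by auto
  have feas: "\<And>i. i \<in> DC \<Longrightarrow> w i \<in> {0, 1}"
    using sol unfolding gcp_solution_def gcp_feasible_def w_def DC_def by auto
  have WDC: "W \<subseteq> DC" unfolding W_def by auto
  have WNn: "W \<subseteq> Nn" using WDC DCn by auto
  have fW: "finite W" using WDC fDC finite_subset by blast
  have JNn: "J \<subseteq> Nn" using JI I'n Nn_def by auto
  have JDC: "J \<subseteq> DC" using JI I'DC by auto
  have h_repr: "(\<Sum>i\<in>I'. c i * interp u i x) = (\<Sum>j\<in>W. surplus u j x)" for x
  proof -
    have "(\<Sum>i\<in>I'. c i * interp u i x) = (\<Sum>i\<in>I'. \<Sum>j\<in>{j\<in>DC. j \<le> i}. c i * surplus u j x)"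
    proof (intro sum.cong refl)
      fix i assume i: "i \<in> I'"
      have "{j. j \<le> i} = {j\<in>DC. j \<le> i}" using i unfolding DC_def down_closure_def by auto
      then show "c i * interp u i x = (\<Sum>j\<in>{j\<in>DC. j \<le> i}. c i * surplus u j x)"
        unfolding interp_sum_surplus by (simp add: sum_distrib_left)
    qed
    also have "\<dots> = (\<Sum>j\<in>DC. \<Sum>i\<in>{i\<in>I'. j \<le> i}. c i * surplus u j x)"
      using sum.swap_restrict[OF fI' fDC, of "\<lambda>i j. c i * surplus u j x" "\<lambda>i j. j \<le> i"] by simp
    also have "\<dots> = (\<Sum>j\<in>DC. w j * surplus u j x)"
      unfolding w_def gcp_w_def by (simp add: sum_distrib_right)
    also have "\<dots> = (\<Sum>j\<in>DC. if j \<in> W then surplus u j x else 0)"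
    proof (intro sum.cong refl)
      fix j assume "j \<in> DC"
      then show "w j * surplus u j x = (if j \<in> W then surplus u j x else 0)"
        using feas[of j] unfolding W_def by auto
    qed
    also have "\<dots> = (\<Sum>j\<in>W. surplus u j x)"
      using fDC WDC by (simp add: sum.inter_filter W_def)
    finally show ?thesis .
  qed
  have QW: "gcp_Q I' c = (\<Sum>j\<in>W. (1/4) ^ norm1 j)"
  proof -
    have "gcp_Q I' c = (\<Sum>j\<in>DC. if j \<in> W then (1/4) ^ norm1 j else 0)"
      unfolding gcp_Q_def DC_def[symmetric] w_def[symmetric]
    proof (intro sum.cong refl)
      fix j assume "j \<in> DC"
      then show "(1/4) ^ norm1 j * w j = (if j \<in> W then (1/4) ^ norm1 j else 0)"
        using feas[of j] unfolding W_def by auto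
    qed
    also have "\<dots> = (\<Sum>j\<in>W. (1/4) ^ norm1 j)"
      using fDC WDC by (simp add: sum.inter_filter W_def)
    finally show ?thesis .
  qed
  define c' where "c' j = (\<Sum>S\<in>Pow UNIV. (-1) ^ card S * (if addS S j \<in> J then 1 else (0::real)))" for j
  have wc': "gcp_w I' c' i = (if i \<in> J then 1 else 0)" for i
    unfolding gcp_w_def c'_def by (rule mobius_up[OF fI' JI down])
  have feas': "gcp_feasible I' c'" unfolding gcp_feasible_def wc' by auto
  have Qc': "gcp_Q I' c' = (\<Sum>j\<in>J. (1/4) ^ norm1 j)"
  proof -
    have "gcp_Q I' c' = (\<Sum>j\<in>DC. if j \<in> J then (1/4) ^ norm1 j else 0)"
      unfolding gcp_Q_def DC_def[symmetric] wc' by (intro sum.cong refl) auto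
    also have "\<dots> = (\<Sum>j\<in>J. (1/4) ^ norm1 j)"
    proof -
      have "{j\<in>DC. j \<in> J} = J" using JDC by auto
      then show ?thesis using sum.inter_filter[OF fDC, of "\<lambda>j. (1/4::real) ^ norm1 j" "\<lambda>j. j \<in> J"] by simp
    qed
    finally show ?thesis .
  qed
  have JW: "(\<Sum>j\<in>J. (1/4::real) ^ norm1 j) \<le> (\<Sum>j\<in>W. (1/4) ^ norm1 j)"
    using sol feas' unfolding gcp_solution_def QW[symmetric] Qc'[symmetric] by blast
  have key: "(\<Sum>j\<in>Nn - W. (1/4::real) ^ norm1 j) \<le> (\<Sum>j\<in>Nn - J. (1/4) ^ norm1 j)"
    using JW by (simp add: sum_diff[OF fNn WNn] sum_diff[OF fNn JNn])
  define E where "E = L2norm (\<lambda>x. u x - (\<Sum>i\<in>I'. c i * interp u i x))"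
  define R where "R N = L2norm (\<lambda>x. u x - (\<Sum>j\<in>{j. norm1 j \<le> N}. surplus u j x))" for N
  have bound: "E \<le> R N + K" if N: "n \<le> N" for N
  proof -
    define SN where "SN = {j::'d\<Rightarrow>nat. norm1 j \<le> N}"
    define F where "F = SN - W"
    have fSN: "finite SN" unfolding SN_def by (rule finite_norm1_le)
    have WSN: "W \<subseteq> SN" using WNn N unfolding SN_def Nn_def by auto
    have fF: "finite F" unfolding F_def using fSN by simp
    have eq: "(\<lambda>x. u x - (\<Sum>i\<in>I'. c i * interp u i x))
        = (\<lambda>x. (u x - (\<Sum>j\<in>SN. surplus u j x)) + (\<Sum>j\<in>F. surplus u j x))"
    proof
      fix x
      have "(\<Sum>j\<in>SN. surplus u j x) = (\<Sum>j\<in>SN - W. surplus u j x) + (\<Sum>j\<in>W. surplus u j x)"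
        by (rule sum.subset_diff[OF WSN fSN])
      then show "u x - (\<Sum>i\<in>I'. c i * interp u i x) = (u x - (\<Sum>j\<in>SN. surplus u j x)) + (\<Sum>j\<in>F. surplus u j x)"
        unfolding h_repr F_def by simp
    qed
    have c1: "continuous_on unit_cube (\<lambda>x. u x - (\<Sum>j\<in>SN. surplus u j x))"
      by (intro continuous_intros u_cont surplus_cont)
    have c2: "continuous_on unit_cube (\<lambda>x. \<Sum>j\<in>F. surplus u j x)"
      by (intro continuous_intros surplus_cont)
    have "E \<le> R N + L2norm (\<lambda>x. \<Sum>j\<in>F. surplus u j x)"
      unfolding E_def R_def SN_def[symmetric] eq by (rule L2norm_tri[OF c1 c2])
    also have "L2norm (\<lambda>x. \<Sum>j\<in>F. surplus u j x) \<le> (\<Sum>j\<in>F. L2norm (surplus u j))"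
      using fF by (intro L2norm_sum surplus_cont)
    also have "\<dots> \<le> (\<Sum>j\<in>F. (1/3) ^ CARD('d) * M * (1/4) ^ norm1 j)"
      by (intro sum_mono L2norm_bound) (use sb M in \<open>simp_all add: mult_ac\<close>)
    also have "\<dots> = (1/3) ^ CARD('d) * M * (\<Sum>j\<in>F. (1/4) ^ norm1 j)"
      by (simp add: sum_distrib_left)
    also have "(\<Sum>j\<in>F. (1/4::real) ^ norm1 j) = (\<Sum>j\<in>{j::'d\<Rightarrow>nat. n < norm1 j \<and> norm1 j \<le> N}. (1/4) ^ norm1 j)
        + (\<Sum>j\<in>Nn - W. (1/4) ^ norm1 j)"
    proof -
      have "F = {j. n < norm1 j \<and> norm1 j \<le> N} \<union> (Nn - W)"
        unfolding F_def SN_def Nn_def using WNn N unfolding Nn_def by auto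
      moreover have "{j::'d\<Rightarrow>nat. n < norm1 j \<and> norm1 j \<le> N} \<inter> (Nn - W) = {}" unfolding Nn_def by auto
      moreover have "finite {j::'d\<Rightarrow>nat. n < norm1 j \<and> norm1 j \<le> N}"
        by (rule finite_subset[OF _ finite_norm1_le[of N]]) auto
      ultimately show ?thesis using fNn by (simp add: sum.union_disjoint)
    qed
    also have "(1/3) ^ CARD('d) * M * ((\<Sum>j\<in>{j::'d\<Rightarrow>nat. n < norm1 j \<and> norm1 j \<le> N}. (1/4) ^ norm1 j)
        + (\<Sum>j\<in>Nn - W. (1/4) ^ norm1 j)) \<le> K"
    proof -
      have "(\<Sum>j\<in>{j::'d\<Rightarrow>nat. n < norm1 j \<and> norm1 j \<le> N}. (1/4::real) ^ norm1 j)
         + (\<Sum>j\<in>Nn - W. (1/4) ^ norm1 j) \<le> Rt (CARD('d) - 1) n + (\<Sum>j\<in>Nn - J. (1/4) ^ norm1 j)"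
        using tail_bound[where 'd='d, of n N] key by linarith
      then show ?thesis unfolding K_def using M by (simp add: distrib_left[symmetric] mult_left_mono)
    qed
    finally show ?thesis by simp
  qed
  have lim: "R \<longlonglongrightarrow> 0"
  proof -
    have "(\<lambda>N. L2sq (\<lambda>x. u x - (\<Sum>j\<in>{j. norm1 j \<le> N}. surplus u j x))) \<longlonglongrightarrow> ennreal 0"
      using u_exp by simp
    from tendsto_enn2real[OF this] have "(\<lambda>N. enn2real (L2sq (\<lambda>x. u x - (\<Sum>j\<in>{j. norm1 j \<le> N}. surplus u j x)))) \<longlonglongrightarrow> 0"
      by simp
    from tendsto_real_sqrt[OF this] show ?thesis unfolding R_def L2norm_def by simp
  qed
  have "E \<le> 0 + K"
  proof (rule tendsto_le[OF trivial_limit_sequentially])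
    show "(\<lambda>N. R N + K) \<longlonglongrightarrow> 0 + K" by (intro tendsto_intros lim)
    show "(\<lambda>N. E) \<longlonglongrightarrow> E" by simp
    show "\<forall>\<^sub>F N in sequentially. E \<le> R N + K" using bound by (auto simp: eventually_at_top_linorder)
  qed
  then show ?thesis unfolding E_def K_def Nn_def by simp
qed

lemma sum_Un_le_nn:
  fixes f :: "'a \<Rightarrow> real"
  assumes "finite A" "finite B" "\<And>x. f x \<ge> 0"
  shows "sum f (A \<union> B) \<le> sum f A + sum f B"
proof -
  have "sum f (A \<union> B) = sum f A + sum f B - sum f (A \<inter> B)" using sum_Un[OF assms(1,2)] by simp
  moreover have "sum f (A \<inter> B) \<ge> 0" using assms(3) by (intro sum_nonneg) auto
  ultimately show ?thesis by linarith
qed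

lemma norm1_strict:
  assumes "m \<le> j" "m \<noteq> j"
  shows "norm1 (m::'d::finite\<Rightarrow>nat) < norm1 j"
proof -
  obtain k where "m k \<noteq> j k" using assms(2) by (auto simp: fun_eq_iff)
  then have "m k < j k" using assms(1) by (simp add: le_fun_def le_neq_implies_less)
  then show ?thesis unfolding norm1_def using assms(1)
    by (intro sum_strict_mono_ex1) (auto simp: le_fun_def)
qed

lemma norm1_addS1: "norm1 (addS {k} (m::'d::finite\<Rightarrow>nat)) = Suc (norm1 m)"
proof -
  have "addS {k} m = (\<lambda>x. m x + (if x = k then 1 else 0))" by (auto simp: addS_def fun_eq_iff)
  then show ?thesis unfolding norm1_def by (simp add: sum.distrib)
qed

lemma norm1_step:
  assumes "m \<le> j" "norm1 j = Suc (norm1 m)"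
  shows "\<exists>k. j = addS {k} (m::'d::finite\<Rightarrow>nat)"
proof -
  have "m \<noteq> j" using assms by auto
  then obtain k where "m k \<noteq> j k" by (auto simp: fun_eq_iff)
  then have mk: "m k < j k" using assms(1) by (simp add: le_fun_def le_neq_implies_less)
  have le: "addS {k} m \<le> j" using assms(1) mk by (auto simp: le_fun_def addS_def)
  have "addS {k} m = j"
  proof (rule ccontr)
    assume "addS {k} m \<noteq> j"
    from norm1_strict[OF le this] show False using assms(2) norm1_addS1[of k m] by simp
  qed
  then show ?thesis by metis
qed

theorem proposition3p3:
  fixes u :: "real^'d::finite \<Rightarrow> real"
    and M :: real                                     \<comment> \<open>the seminorm value |u|_{H^2_mix}\<close>
    and n :: nat and lam kap tn tn1 :: real
    and t :: "('d \<Rightarrow> nat) \<Rightarrow> real"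
    and P :: "'w measure"
    and U :: "('d \<Rightarrow> nat) \<Rightarrow> 'w \<Rightarrow> nat"
    and c :: "'w \<Rightarrow> ('d \<Rightarrow> nat) \<Rightarrow> real"
  assumes d2: "CARD('d) \<ge> 2" and n2: "n \<ge> 2"
    and lam: "lam > 0" and kap: "0 < kap" "kap \<le> 1"
    and u_cont: "continuous_on unit_cube u"
    and M_nonneg: "M \<ge> 0"
    and u_expansion:
      "(\<lambda>N. L2sq (\<lambda>x. u x - (\<Sum>j\<in>{j. norm1 j \<le> N}. surplus u j x))) \<longlonglongrightarrow> 0"
    and surplus_bound:
      "\<And>j. L2sq (surplus u j) \<le> ennreal (((1/3) ^ CARD('d) * (1/4) ^ norm1 j * M)\<^sup>2)"
    and t_nonneg: "tn \<ge> 0" "tn1 \<ge> 0"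
    and t_n: "\<And>i. norm1 i = n \<Longrightarrow> t i \<in> {0..tn}"
    and t_n1: "\<And>i. norm1 i = n - 1 \<Longrightarrow> t i \<in> {0..tn1}"
    and P: "prob_space P"
    and U_meas: "\<And>i. U i \<in> measurable P (count_space UNIV)"
    and U_01: "\<And>i w. w \<in> space P \<Longrightarrow> U i w \<in> {0, 1}"
    and U_small: "\<And>i. norm1 i < n - 1 \<Longrightarrow> (AE w in P. U i w = 0)"
    and U_fault: "\<And>i. norm1 i \<in> {n - 1, n} \<Longrightarrow>
                     measure P {w \<in> space P. U i w = 1} = weibull_G lam kap (t i)"
    and c_sol: "\<And>w. w \<in> space P \<Longrightarrow> gcp_solution {i. norm1 i \<le> n \<and> U i w = 0} (c w)"
    and err_meas: "(\<lambda>w. L2norm (\<lambda>x. u x - (\<Sum>i\<in>{i. norm1 i \<le> n \<and> U i w = 0}.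
                        c w i * interp u i x))) \<in> borel_measurable P"
  shows "prob_space.expectation P
           (\<lambda>w. L2norm (\<lambda>x. u x - (\<Sum>i\<in>{i. norm1 i \<le> n \<and> U i w = 0}. c w i * interp u i x)))
         \<le> eps_n CARD('d) n M *
            min 16 (1 + 3 * (real CARD('d) + 5 - exp (- ((tn / lam) powr kap))
                       - (real CARD('d) + 4) * exp (- ((tn1 / lam) powr kap))))"
proof -
  interpret P: prob_space P by (rule P)
  note [measurable] = U_meas
  define D where "D = CARD('d)"
  have D1: "CARD('d) \<ge> 1" using d2 by simp
  define eps where "eps = eps_n CARD('d) n M"
  define B where "B = (1/3::real) ^ CARD('d) * M"
  have B0: "B \<ge> 0" unfolding B_def using M_nonneg by simp
  have epsRt: "eps = B * Rt (CARD('d) - 1) n" unfolding eps_def B_def using eps_Rt[OF D1] by simp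
  define Cb where "Cb = real ((n + Suc (CARD('d) - 1)) choose (CARD('d) - 1))"
  have eps_low: "B * (1/4) ^ n * Cb \<le> 3 * eps"
  proof -
    have "(1/3) * (1/4) ^ n * Cb \<le> Rt (CARD('d) - 1) n" unfolding Cb_def by (rule Rt_lower)
    then have "B * ((1/3) * (1/4) ^ n * Cb) \<le> B * Rt (CARD('d) - 1) n"
      using B0 by (rule mult_left_mono)
    then show ?thesis unfolding epsRt by simp
  qed
  have eps0: "eps \<ge> 0" unfolding epsRt using B0 Rt_nonneg by simp
  define Lv where "Lv k = {j::'d\<Rightarrow>nat. norm1 j = k}" for k
  have fLv: "finite (Lv k)" for k unfolding Lv_def by (rule finite_norm1_eq)
  have cardLv: "real (card (Lv k)) \<le> Cb" if "k \<le> n" for k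
  proof -
    have "card (Lv k) = (k + (CARD('d) - 1)) choose (CARD('d) - 1)" unfolding Lv_def by (rule card_level')
    also have "\<dots> \<le> (n + Suc (CARD('d) - 1)) choose (CARD('d) - 1)"
      using that by (intro binomial_right_mono) simp
    finally show ?thesis unfolding Cb_def by simp
  qed
  define I' where "I' w = {i. norm1 i \<le> n \<and> U i w = 0}" for w
  define J where "J w = {i. norm1 i \<le> n \<and> (\<forall>m\<le>i. U m w = 0)}" for w
  define Nn where "Nn = {j::'d\<Rightarrow>nat. norm1 j \<le> n}"
  define L where "L w = (\<Sum>j\<in>Nn - J w. (1/4::real) ^ norm1 j)" for w
  define err where "err w = L2norm (\<lambda>x. u x - (\<Sum>i\<in>I' w. c w i * interp u i x))" for w
  have fNn: "finite Nn" unfolding Nn_def by (rule finite_norm1_le)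
  have det: "err w \<le> eps + B * L w" if w: "w \<in> space P" for w
  proof -
    have "err w \<le> (1/3) ^ CARD('d) * M * Rt (CARD('d) - 1) n
      + (1/3) ^ CARD('d) * M * (\<Sum>j\<in>{j. norm1 j \<le> n} - J w. (1/4) ^ norm1 j)"
      unfolding err_def
    proof (rule det_bound[OF u_cont M_nonneg u_expansion surplus_bound])
      show "I' w \<subseteq> {i. norm1 i \<le> n}" unfolding I'_def by auto
      show "J w \<subseteq> I' w" unfolding J_def I'_def by auto
      show "\<And>j i. j \<in> J w \<Longrightarrow> i \<le> j \<Longrightarrow> i \<in> J w"
        unfolding J_def using norm1_mono order_trans by fastforce
      show "gcp_solution (I' w) (c w)" unfolding I'_def by (rule c_sol[OF w])
    qed
    then show ?thesis unfolding epsRt B_def L_def Nn_def by (simp add: algebra_simps)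
  qed
  define Ltot where "Ltot = (\<Sum>j\<in>Nn. (1/4::real) ^ norm1 j)"
  have L0: "0 \<le> L w" for w unfolding L_def by (intro sum_nonneg) auto
  have Ltot: "L w \<le> Ltot" for w unfolding L_def Ltot_def using fNn by (intro sum_mono2) auto
  have err0: "0 \<le> err w" for w unfolding err_def L2norm_def by simp
  have err_eq: "err = (\<lambda>w. L2norm (\<lambda>x. u x - (\<Sum>i\<in>{i. norm1 i \<le> n \<and> U i w = 0}.
                        c w i * interp u i x)))" unfolding err_def I'_def by simp
  have int_err: "integrable P err"
  proof (rule P.integrable_const_bound)
    show "AE w in P. norm (err w) \<le> eps + B * Ltot"
    proof (rule AE_I2)
      fix w assume "w \<in> space P"
      then have "err w \<le> eps + B * L w" by (rule det)
      also have "\<dots> \<le> eps + B * Ltot" using Ltot[of w] B0 by (simp add: mult_left_mono)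
      finally show "norm (err w) \<le> eps + B * Ltot" using err0[of w] by simp
    qed
    show "err \<in> borel_measurable P" unfolding err_eq by (rule err_meas)
  qed
  have AE_G: "AE w in P. \<forall>m\<in>{m::'d\<Rightarrow>nat. norm1 m < n - 1}. U m w = 0"
  proof (subst AE_ball_countable)
    show "countable {m::'d\<Rightarrow>nat. norm1 m < n - 1}"
      by (rule countable_finite, rule finite_subset[OF _ finite_norm1_le[of n]]) auto
    show "\<forall>m\<in>{m::'d\<Rightarrow>nat. norm1 m < n - 1}. AE w in P. U m w = 0" using U_small by auto
  qed
  define F1 where "F1 w = {j\<in>Lv (n - 1). U j w = 1}" for w
  define F2 where "F2 w = {j\<in>Lv n. U j w = 1}" for w
  define F3 where "F3 w = (\<lambda>(m, k). addS {k} m) ` (F1 w \<times> UNIV)" for w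
  have miss: "Nn - J w \<subseteq> F1 w \<union> F2 w \<union> F3 w"
    if w: "w \<in> space P" and G: "\<forall>m\<in>{m::'d\<Rightarrow>nat. norm1 m < n - 1}. U m w = 0" for w
  proof
    fix j assume j: "j \<in> Nn - J w"
    then have jn: "norm1 j \<le> n" unfolding Nn_def by simp
    from j obtain m where m: "m \<le> j" "U m w \<noteq> 0" unfolding J_def Nn_def by auto
    then have Um: "U m w = 1" using U_01[OF w, of m] by auto
    have mn: "norm1 m \<ge> n - 1"
    proof (rule ccontr)
      assume "\<not> norm1 m \<ge> n - 1"
      then have "m \<in> {m. norm1 m < n - 1}" by simp
      then have "U m w = 0" by (rule bspec[OF G])
      then show False using m(2) by simp
    qed
    have mj: "norm1 m \<le> norm1 j" by (rule norm1_mono[OF m(1)])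
    show "j \<in> F1 w \<union> F2 w \<union> F3 w"
    proof (cases "m = j")
      case True
      then show ?thesis using Um mn mj jn n2 unfolding F1_def F2_def Lv_def
        by (cases "norm1 j = n") auto
    next
      case False
      have lt: "norm1 m < norm1 j" by (rule norm1_strict[OF m(1) False])
      then have mn1: "norm1 m = n - 1" and jn': "norm1 j = Suc (norm1 m)" using mn jn n2 by auto
      obtain k where jk: "j = addS {k} m" using norm1_step[OF m(1) jn'] by blast
      have "m \<in> F1 w" unfolding F1_def Lv_def using mn1 Um by simp
      then have "(m, k) \<in> F1 w \<times> UNIV" by simp
      then have "addS {k} m \<in> F3 w" unfolding F3_def by (rule rev_image_eqI) simp
      then show ?thesis using jk by simp
    qed
  qed
  have F1sub: "F1 w \<subseteq> Lv (n - 1)" and F2sub: "F2 w \<subseteq> Lv n" for w unfolding F1_def F2_def by auto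
  have F3lev: "F3 w \<subseteq> Lv n" for w
  proof
    fix j assume "j \<in> F3 w"
    then obtain m k where "m \<in> F1 w" "j = addS {k} m" unfolding F3_def by auto
    then show "j \<in> Lv n" using n2 norm1_addS1[of k m] unfolding F1_def Lv_def by auto
  qed
  have fF1: "finite (F1 w)" and fF2: "finite (F2 w)" for w
    using F1sub F2sub fLv finite_subset by metis+
  have cardF3: "card (F3 w) \<le> CARD('d) * card (F1 w)" for w
  proof -
    have "card (F3 w) \<le> card (F1 w \<times> (UNIV::'d set))" unfolding F3_def by (rule card_image_le) (simp add: fF1)
    then show ?thesis by (simp add: card_cartesian_product mult.commute)
  qed
  have fF3: "finite (F3 w)" for w unfolding F3_def using fF1 by simp
  have Lb: "L w \<le> (1/4) ^ n * ((4 + real CARD('d)) * real (card (F1 w)) + real (card (F2 w)))"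
    if w: "w \<in> space P" and G: "\<forall>m\<in>{m::'d\<Rightarrow>nat. norm1 m < n - 1}. U m w = 0" for w
  proof -
    have "L w \<le> (\<Sum>j\<in>F1 w \<union> F2 w \<union> F3 w. (1/4::real) ^ norm1 j)"
      unfolding L_def using miss[OF w G] fF1 fF2 fF3 by (intro sum_mono2) auto
    also have "\<dots> \<le> (\<Sum>j\<in>F1 w. (1/4::real) ^ norm1 j) + (\<Sum>j\<in>F2 w. (1/4::real) ^ norm1 j)
        + (\<Sum>j\<in>F3 w. (1/4::real) ^ norm1 j)"
    proof -
      have "(\<Sum>j\<in>F1 w \<union> F2 w \<union> F3 w. (1/4::real) ^ norm1 j) \<le> (\<Sum>j\<in>F1 w \<union> F2 w. (1/4::real) ^ norm1 j) + (\<Sum>j\<in>F3 w. (1/4::real) ^ norm1 j)"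
        using fF1 fF2 fF3 by (intro sum_Un_le_nn) auto
      moreover have "(\<Sum>j\<in>F1 w \<union> F2 w. (1/4::real) ^ norm1 j) \<le> (\<Sum>j\<in>F1 w. (1/4::real) ^ norm1 j) + (\<Sum>j\<in>F2 w. (1/4::real) ^ norm1 j)"
        using fF1 fF2 by (intro sum_Un_le_nn) auto
      ultimately show ?thesis by linarith
    qed
    also have "(\<Sum>j\<in>F1 w. (1/4::real) ^ norm1 j) = real (card (F1 w)) * (1/4) ^ (n - 1)"
    proof -
      have "(\<Sum>j\<in>F1 w. (1/4::real) ^ norm1 j) = (\<Sum>j\<in>F1 w. (1/4::real) ^ (n - 1))"
        using F1sub[of w] unfolding Lv_def by (intro sum.cong) auto
      then show ?thesis by simp
    qed
    also have "(\<Sum>j\<in>F2 w. (1/4::real) ^ norm1 j) = real (card (F2 w)) * (1/4) ^ n"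
    proof -
      have "(\<Sum>j\<in>F2 w. (1/4::real) ^ norm1 j) = (\<Sum>j\<in>F2 w. (1/4::real) ^ n)"
        using F2sub[of w] unfolding Lv_def by (intro sum.cong) auto
      then show ?thesis by simp
    qed
    also have "(\<Sum>j\<in>F3 w. (1/4::real) ^ norm1 j) = real (card (F3 w)) * (1/4) ^ n"
    proof -
      have "(\<Sum>j\<in>F3 w. (1/4::real) ^ norm1 j) = (\<Sum>j\<in>F3 w. (1/4::real) ^ n)"
        using F3lev[of w] unfolding Lv_def by (intro sum.cong) auto
      then show ?thesis by simp
    qed
    also have "(1/4::real) ^ (n - 1) = 4 * (1/4) ^ n"
    proof -
      have "n = Suc (n - 1)" using n2 by simp
      then have "(1/4::real) ^ n = (1/4) * (1/4) ^ (n - 1)" by (metis power_Suc)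
      then show ?thesis by simp
    qed
    also have "real (card (F1 w)) * (4 * (1 / 4) ^ n) + real (card (F2 w)) * (1 / 4) ^ n +
        real (card (F3 w)) * (1 / 4) ^ n \<le> (1/4) ^ n * ((4 + real CARD('d)) * real (card (F1 w)) + real (card (F2 w)))"
    proof -
      have "real (card (F3 w)) \<le> real CARD('d) * real (card (F1 w))" using cardF3[of w]
        by (metis of_nat_le_iff of_nat_mult)
      then have "real (card (F3 w)) * (1 / 4) ^ n \<le> real CARD('d) * real (card (F1 w)) * (1 / 4) ^ n"
        by (intro mult_right_mono) auto
      then show ?thesis by (simp add: algebra_simps)
    qed
    finally show ?thesis .
  qed
  have q4: "(1/4::real) ^ (n - 1) = 4 * (1/4) ^ n"
  proof -
    have "n = Suc (n - 1)" using n2 by simp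
    then have "(1/4::real) ^ n = (1/4) * (1/4) ^ (n - 1)" by (metis power_Suc)
    then show ?thesis by simp
  qed
  have sumLv: "(\<Sum>j\<in>Lv k. (1/4::real) ^ norm1 j) = real (card (Lv k)) * (1/4) ^ k" for k
  proof -
    have "(\<Sum>j\<in>Lv k. (1/4::real) ^ norm1 j) = (\<Sum>j\<in>Lv k. (1/4::real) ^ k)"
      unfolding Lv_def by (intro sum.cong) auto
    then show ?thesis by simp
  qed
  have La: "L w \<le> 5 * (1/4) ^ n * Cb"
    if w: "w \<in> space P" and G: "\<forall>m\<in>{m::'d\<Rightarrow>nat. norm1 m < n - 1}. U m w = 0" for w
  proof -
    have "L w \<le> (\<Sum>j\<in>Lv (n - 1) \<union> Lv n. (1/4::real) ^ norm1 j)"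
      unfolding L_def using miss[OF w G] F1sub[of w] F2sub[of w] F3lev[of w] fLv
      by (intro sum_mono2) auto
    also have "\<dots> \<le> (\<Sum>j\<in>Lv (n - 1). (1/4::real) ^ norm1 j) + (\<Sum>j\<in>Lv n. (1/4::real) ^ norm1 j)"
      using fLv by (intro sum_Un_le_nn) auto
    also have "\<dots> = real (card (Lv (n - 1))) * (4 * (1/4) ^ n) + real (card (Lv n)) * (1/4) ^ n"
      unfolding sumLv q4 ..
    also have "\<dots> \<le> Cb * (4 * (1/4) ^ n) + Cb * (1/4) ^ n"
      using cardLv[of "n - 1"] cardLv[of n] by (intro add_mono mult_right_mono) auto
    finally show ?thesis by (simp add: algebra_simps)
  qed
  have AEa: "AE w in P. err w \<le> 16 * eps"
  proof (rule AE_mp[OF AE_G], rule AE_I2, rule impI)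
    fix w assume w: "w \<in> space P" and G: "\<forall>m\<in>{m::'d\<Rightarrow>nat. norm1 m < n - 1}. U m w = 0"
    have "err w \<le> eps + B * L w" by (rule det[OF w])
    also have "\<dots> \<le> eps + B * (5 * (1/4) ^ n * Cb)" using La[OF w G] B0 by (simp add: mult_left_mono)
    also have "\<dots> = eps + 5 * (B * (1/4) ^ n * Cb)" by simp
    also have "\<dots> \<le> eps + 5 * (3 * eps)" using eps_low by (simp add: mult_ac)
    finally show "err w \<le> 16 * eps" by simp
  qed
  have E16: "integral\<^sup>L P err \<le> 16 * eps"
  proof -
    have "integral\<^sup>L P err \<le> integral\<^sup>L P (\<lambda>w. 16 * eps)"
      by (rule integral_mono_AE[OF int_err _ AEa]) simp
    also have "\<dots> = 16 * eps" by (simp add: P.prob_space)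
    finally show ?thesis .
  qed
  define X where "X j w = (indicator {w \<in> space P. U j w = 1} w :: real)" for j w
  have setsX: "{w \<in> space P. U j w = 1} \<in> sets P" for j by measurable
  have int_X: "integrable P (X j)" for j
    unfolding X_def using setsX[of j] P.emeasure_finite[of "{w \<in> space P. U j w = 1}"]
    by (intro integrable_real_indicator) (auto simp: less_top[symmetric])
  have iX: "integral\<^sup>L P (X j) = measure P {w \<in> space P. U j w = 1}" for j
  proof -
    have "{w \<in> space P. U j w = 1} \<inter> space P = {w \<in> space P. U j w = 1}" by auto
    then show ?thesis unfolding X_def integral_indicator by simp
  qed
  define K1 where "K1 = B * (1/4) ^ n * (4 + real CARD('d))"
  define K0 where "K0 = B * (1/4) ^ n"
  define g where "g w = eps + K1 * (\<Sum>j\<in>Lv (n - 1). X j w) + K0 * (\<Sum>j\<in>Lv n. X j w)" for w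
  have int_S: "integrable P (\<lambda>w. \<Sum>j\<in>A. X j w)" for A
    by (intro Bochner_Integration.integrable_sum int_X)
  have iS: "integral\<^sup>L P (\<lambda>w. \<Sum>j\<in>A. X j w) = (\<Sum>j\<in>A. measure P {w \<in> space P. U j w = 1})" for A
    by (subst Bochner_Integration.integral_sum) (simp_all add: int_X iX)
  have int_g: "integrable P g" unfolding g_def
    by (intro Bochner_Integration.integrable_add integrable_mult_right int_S) simp_all
  have ig: "integral\<^sup>L P g = eps + K1 * (\<Sum>j\<in>Lv (n - 1). measure P {w \<in> space P. U j w = 1})
      + K0 * (\<Sum>j\<in>Lv n. measure P {w \<in> space P. U j w = 1})"
    unfolding g_def
    by (subst Bochner_Integration.integral_add; (intro Bochner_Integration.integrable_add integrable_mult_right int_S)?)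
      (simp_all add: Bochner_Integration.integral_add integrable_mult_right int_S iS P.prob_space)
  have cardF1: "real (card (F1 w)) = (\<Sum>j\<in>Lv (n - 1). X j w)" if w: "w \<in> space P" for w
  proof -
    have "(\<Sum>j\<in>Lv (n - 1). X j w) = (\<Sum>j\<in>Lv (n - 1). if U j w = 1 then 1 else 0)"
      unfolding X_def using w by (intro sum.cong) (auto simp: indicator_def)
    also have "\<dots> = real (card (F1 w))"
      unfolding F1_def using sum.inter_filter[OF fLv[of "n - 1"], of "\<lambda>_. (1::real)" "\<lambda>j. U j w = 1"] by simp
    finally show ?thesis by simp
  qed
  have cardF2: "real (card (F2 w)) = (\<Sum>j\<in>Lv n. X j w)" if w: "w \<in> space P" for w
  proof -
    have "(\<Sum>j\<in>Lv n. X j w) = (\<Sum>j\<in>Lv n. if U j w = 1 then 1 else 0)"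
      unfolding X_def using w by (intro sum.cong) (auto simp: indicator_def)
    also have "\<dots> = real (card (F2 w))"
      unfolding F2_def using sum.inter_filter[OF fLv[of n], of "\<lambda>_. (1::real)" "\<lambda>j. U j w = 1"] by simp
    finally show ?thesis by simp
  qed
  have AEb: "AE w in P. err w \<le> g w"
  proof (rule AE_mp[OF AE_G], rule AE_I2, rule impI)
    fix w assume w: "w \<in> space P" and G: "\<forall>m\<in>{m::'d\<Rightarrow>nat. norm1 m < n - 1}. U m w = 0"
    have "err w \<le> eps + B * L w" by (rule det[OF w])
    also have "\<dots> \<le> eps + B * ((1/4) ^ n * ((4 + real CARD('d)) * real (card (F1 w)) + real (card (F2 w))))"
      using Lb[OF w G] B0 by (simp add: mult_left_mono)
    also have "\<dots> = g w" unfolding g_def K1_def K0_def cardF1[OF w, symmetric] cardF2[OF w, symmetric]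
      by (simp add: algebra_simps)
    finally show "err w \<le> g w" .
  qed
  define e0 where "e0 = exp (- ((tn / lam) powr kap))"
  define e1 where "e1 = exp (- ((tn1 / lam) powr kap))"
  have e0: "e0 \<le> 1" unfolding e0_def by simp
  have e1: "e1 \<le> 1" unfolding e1_def by simp
  have Gbound: "weibull_G lam kap (t j) \<le> 1 - exp (- ((s / lam) powr kap))"
    if "t j \<in> {0..s}" for j s
  proof -
    have "weibull_G lam kap (t j) \<le> 1 - exp (- ((t j / lam) powr kap))"
      using that by (intro weibull_le lam kap) auto
    moreover have "(t j / lam) powr kap \<le> (s / lam) powr kap"
      using that lam kap by (intro powr_mono2 divide_right_mono) auto
    then have "exp (- ((s / lam) powr kap)) \<le> exp (- ((t j / lam) powr kap))" by simp
    ultimately show ?thesis by linarith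
  qed
  have S1: "(\<Sum>j\<in>Lv (n - 1). measure P {w \<in> space P. U j w = 1}) \<le> Cb * (1 - e1)"
  proof -
    have "(\<Sum>j\<in>Lv (n - 1). measure P {w \<in> space P. U j w = 1}) \<le> (\<Sum>j\<in>Lv (n - 1). 1 - e1)"
    proof (intro sum_mono)
      fix j assume "j \<in> Lv (n - 1)"
      then have j: "norm1 j = n - 1" unfolding Lv_def by simp
      then show "measure P {w \<in> space P. U j w = 1} \<le> 1 - e1"
      proof -
        have "measure P {w \<in> space P. U j w = 1} = weibull_G lam kap (t j)"
          using U_fault[of j] j by simp
        then show ?thesis unfolding e1_def using Gbound[OF t_n1[OF j]] by simp
      qed
    qed
    also have "\<dots> = real (card (Lv (n - 1))) * (1 - e1)" by simp
    also have "\<dots> \<le> Cb * (1 - e1)" using cardLv[of "n - 1"] e1 by (intro mult_right_mono) auto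
    finally show ?thesis .
  qed
  have S0: "(\<Sum>j\<in>Lv n. measure P {w \<in> space P. U j w = 1}) \<le> Cb * (1 - e0)"
  proof -
    have "(\<Sum>j\<in>Lv n. measure P {w \<in> space P. U j w = 1}) \<le> (\<Sum>j\<in>Lv n. 1 - e0)"
    proof (intro sum_mono)
      fix j assume "j \<in> Lv n"
      then have j: "norm1 j = n" unfolding Lv_def by simp
      then show "measure P {w \<in> space P. U j w = 1} \<le> 1 - e0"
      proof -
        have "measure P {w \<in> space P. U j w = 1} = weibull_G lam kap (t j)"
          using U_fault[of j] j by simp
        then show ?thesis unfolding e0_def using Gbound[OF t_n[OF j]] by simp
      qed
    qed
    also have "\<dots> = real (card (Lv n)) * (1 - e0)" by simp
    also have "\<dots> \<le> Cb * (1 - e0)" using cardLv[of n] e0 by (intro mult_right_mono) auto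
    finally show ?thesis .
  qed
  have EX: "integral\<^sup>L P err \<le> eps * (1 + 3 * (real CARD('d) + 5 - e0 - (real CARD('d) + 4) * e1))"
  proof -
    have "integral\<^sup>L P err \<le> integral\<^sup>L P g" by (rule integral_mono_AE[OF int_err int_g AEb])
    also have "\<dots> \<le> eps + K1 * (Cb * (1 - e1)) + K0 * (Cb * (1 - e0))"
      unfolding ig using S1 S0 B0 unfolding K1_def K0_def
      by (intro add_mono mult_left_mono) auto
    also have "\<dots> = eps + (4 + real CARD('d)) * (1 - e1) * (B * (1/4) ^ n * Cb) + (1 - e0) * (B * (1/4) ^ n * Cb)"
      unfolding K1_def K0_def by (simp add: algebra_simps)
    also have "\<dots> \<le> eps + (4 + real CARD('d)) * (1 - e1) * (3 * eps) + (1 - e0) * (3 * eps)"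
      using eps_low e0 e1 by (intro add_mono mult_left_mono order_refl) auto
    also have "\<dots> = eps * (1 + 3 * (real CARD('d) + 5 - e0 - (real CARD('d) + 4) * e1))"
      by (simp add: algebra_simps)
    finally show ?thesis .
  qed
  have expE: "prob_space.expectation P
           (\<lambda>w. L2norm (\<lambda>x. u x - (\<Sum>i\<in>{i. norm1 i \<le> n \<and> U i w = 0}. c w i * interp u i x)))
      = integral\<^sup>L P err" unfolding err_eq ..
  show ?thesis unfolding expE eps_def[symmetric] e0_def[symmetric] e1_def[symmetric]
    using E16 EX eps0 by (auto simp: min_def mult.commute)
qed

end
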